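(* Up to multiplication by a positive integer, every basic weight of a basic system of type $B$ is one of the following (coordinates $\lambda_k=\langle\lambda,e_k\rangle$): (1) $(B_2,1,1)$: $(0,1)$; (2) $(B_2,1,2)$: $(\tfrac12,\tfrac12)$, $(-\tfrac12,\tfrac12)$; (3) $(B_2,2,1)$: $(1,0)$, $(0,-1)$; (4) $(B_2,2,2)$: $(\tfrac12,-\tfrac12)$; (5) $(B_3,2,2)$: $(1,0,1)$, $(0,-1,1)$; (6) $(B_3,2,3)$: $(\tfrac12,-\tfrac12,\tfrac12)$; (7) $(B_3,3,2)$: $(1,0,-1)$; (8) $(B_4,3,3)$: $(1,0,-1,1)$.
   Context: $B_n$ is realized in $\mathbb R^n$ with orthonormal basis $e_1,\dots,e_n$ and standard inner product, simple roots $\alpha_k=e_k-e_{k+1}$ ($k<n$), $\alpha_n=e_n$. Let $W$ be the Weyl group, $\alpha^\vee=2\alpha/\langle\alpha,\alpha\rangle$. A weight is integral if $\langle\lambda,\alpha^\vee\rangle\in\mathbb Z$ for all roots $\alpha$; $\overline\lambda$ is the dominant weight in $W\lambda$. For $I=\Delta\setminus\{\alpha_i\}$, $J=\Delta\setminus\{\alpha_j\}$, a basic weight of $(\Phi,i,j)$ is an integral $\lambda$ with $\langle\lambda,\alpha^\vee\rangle\in\mathbb Z_{>0}$ for all $\alpha\in I$ and $\{\alpha\in\Delta:\langle\overline\lambda,\alpha\rangle=0\}=J$; $(\Phi,i,j)$ is a basic system if it has a basic weight. *)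

theory Defs
  imports Complex_Main
begin

text \<open>Vectors of \<real>^n are represented as real lists of length n; coordinate
  k (1-based) of x is x ! (k - 1).\<close>

definition ip :: "real list \<Rightarrow> real list \<Rightarrow> real" where
  "ip x y = sum_list (map (\<lambda>(a, b). a * b) (zip x y))"

definition vadd :: "real list \<Rightarrow> real list \<Rightarrow> real list" where
  "vadd x y = map (\<lambda>(a, b). a + b) (zip x y)"

definition smult :: "real \<Rightarrow> real list \<Rightarrow> real list" where
  "smult c x = map (\<lambda>a. c * a) x"

definition vsub :: "real list \<Rightarrow> real list \<Rightarrow> real list" where
  "vsub x y = vadd x (smult (-1) y)"

definition ev :: "nat \<Rightarrow> nat \<Rightarrow> real list" where
  "ev n k = map (\<lambda>t. if t = k then 1 else 0) [1..<Suc n]"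

definition roots_B :: "nat \<Rightarrow> real list set" where
  "roots_B n =
     {smult s (ev n k) | s k. s \<in> {1, -1} \<and> k \<in> {1..n}} \<union>
     {vadd (smult s (ev n k)) (smult t (ev n l)) | s t k l.
        s \<in> {1, -1} \<and> t \<in> {1, -1} \<and> k \<in> {1..n} \<and> l \<in> {1..n} \<and> k \<noteq> l}"

definition simple_root :: "nat \<Rightarrow> nat \<Rightarrow> real list" where
  "simple_root n k = (if k < n then vsub (ev n k) (ev n (Suc k)) else ev n n)"

definition simple_roots :: "nat \<Rightarrow> real list set" where
  "simple_roots n = simple_root n ` {1..n}"

definition coroot :: "real list \<Rightarrow> real list" where
  "coroot \<alpha> = smult (2 / ip \<alpha> \<alpha>) \<alpha>"

definition reflect :: "real list \<Rightarrow> real list \<Rightarrow> real list" where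
  "reflect \<alpha> x = vsub x (smult (ip x (coroot \<alpha>)) \<alpha>)"

inductive_set weyl_orbit :: "nat \<Rightarrow> real list \<Rightarrow> real list set" for n lam where
  base: "lam \<in> weyl_orbit n lam"
| step: "\<mu> \<in> weyl_orbit n lam \<Longrightarrow> \<alpha> \<in> roots_B n \<Longrightarrow> reflect \<alpha> \<mu> \<in> weyl_orbit n lam"

definition integral_weight :: "nat \<Rightarrow> real list \<Rightarrow> bool" where
  "integral_weight n lam \<longleftrightarrow> length lam = n \<and> (\<forall>\<alpha>\<in>roots_B n. ip lam (coroot \<alpha>) \<in> \<int>)"

definition dominant :: "nat \<Rightarrow> real list \<Rightarrow> bool" where
  "dominant n \<mu> \<longleftrightarrow> (\<forall>\<alpha>\<in>simple_roots n. ip \<mu> \<alpha> \<ge> 0)"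

definition dominant_rep :: "nat \<Rightarrow> real list \<Rightarrow> real list" where
  "dominant_rep n lam = (THE \<mu>. \<mu> \<in> weyl_orbit n lam \<and> dominant n \<mu>)"

definition basic_weight :: "nat \<Rightarrow> nat \<Rightarrow> nat \<Rightarrow> real list \<Rightarrow> bool" where
  "basic_weight n i j lam \<longleftrightarrow>
     integral_weight n lam \<and>
     (\<forall>\<alpha>\<in>simple_roots n - {simple_root n i}. ip lam (coroot \<alpha>) \<in> \<int> \<and> ip lam (coroot \<alpha>) > 0) \<and>
     {\<alpha>\<in>simple_roots n. ip (dominant_rep n lam) \<alpha> = 0} = simple_roots n - {simple_root n j}"

definition basic_system :: "nat \<Rightarrow> nat \<Rightarrow> nat \<Rightarrow> bool" where
  "basic_system n i j \<longleftrightarrow> (\<exists>lam. basic_weight n i j lam)"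

definition listed_B :: "nat \<Rightarrow> nat \<Rightarrow> nat \<Rightarrow> real list set" where
  "listed_B n i j =
    (if (n, i, j) = (2, 1, 1) then {[0, 1]}
     else if (n, i, j) = (2, 1, 2) then {[1/2, 1/2], [-1/2, 1/2]}
     else if (n, i, j) = (2, 2, 1) then {[1, 0], [0, -1]}
     else if (n, i, j) = (2, 2, 2) then {[1/2, -1/2]}
     else if (n, i, j) = (3, 2, 2) then {[1, 0, 1], [0, -1, 1]}
     else if (n, i, j) = (3, 2, 3) then {[1/2, -1/2, 1/2]}
     else if (n, i, j) = (3, 3, 2) then {[1, 0, -1]}
     else if (n, i, j) = (4, 3, 3) then {[1, 0, -1, 1]}
     else {})"

end

theory Submission
  imports Defs "HOL-Library.Multiset"
begin



lemma core2:
  fixes x0 x1 a :: real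
  assumes "i \<in> {1..2}" "j \<in> {1..2}" "a > 0"
  "x0 = a \<or> x0 = -a \<or> x0 = 0" "x1 = a \<or> x1 = -a \<or> x1 = 0"
  "\<bar>x0\<bar> + \<bar>x1\<bar> = real j * a"
  "1 \<noteq> i \<Longrightarrow> x0 > x1"
  "i \<noteq> 2 \<Longrightarrow> x1 > 0"
  "if j < 2 then a = real m else 2 * a = real m"
  shows "\<exists>m::nat. m > 0 \<and> (\<exists>\<mu>\<in>listed_B 2 i j. [x0, x1] = smult (real m) \<mu>)"
proof -
  have m: "m > 0" using assms(3,9) by (auto split: if_splits)
  have ij: "i = 1 \<or> i = 2" "j = 1 \<or> j = 2" using assms(1,2) by auto
  have aa: "\<bar>a\<bar> = a" using assms(3) by simp
  show ?thesis
    apply (insert assms(4,5) ij assms(3,6,7,8,9) m aa)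
    apply (elim disjE)
    by (auto simp: listed_B_def smult_def intro!: exI[of _ m])
qed



lemma core3:
  fixes x0 x1 x2 a :: real
  assumes "i \<in> {1..3}" "j \<in> {1..3}" "a > 0"
  "x0 = a \<or> x0 = -a \<or> x0 = 0" "x1 = a \<or> x1 = -a \<or> x1 = 0" "x2 = a \<or> x2 = -a \<or> x2 = 0"
  "\<bar>x0\<bar> + \<bar>x1\<bar> + \<bar>x2\<bar> = real j * a"
  "1 \<noteq> i \<Longrightarrow> x0 > x1" "2 \<noteq> i \<Longrightarrow> x1 > x2"
  "i \<noteq> 3 \<Longrightarrow> x2 > 0"
  "if j < 3 then a = real m else 2 * a = real m"
  shows "\<exists>m::nat. m > 0 \<and> (\<exists>\<mu>\<in>listed_B 3 i j. [x0, x1, x2] = smult (real m) \<mu>)"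
proof -
  have m: "m > 0" using assms(3,11) by (auto split: if_splits)
  have aa: "\<bar>a\<bar> = a" using assms(3) by simp
  consider "i = 1" | "i = 2" | "i = 3" using assms(1) by force
  then show ?thesis
  proof cases
    case 1
    then have "x1 > x2" "x2 > 0" using assms(9,10) by auto
    then show ?thesis using assms(3,5,6) by auto
  next
    case 2
    then have x2: "x2 = a" using assms(10) assms(6) assms(3) by auto
    have "x0 > x1" using assms(8) 2 by auto
    then consider "x0 = a" "x1 = 0" | "x0 = a" "x1 = -a" | "x0 = 0" "x1 = -a"
      using assms(3,4,5) by auto
    then show ?thesis
    proof cases
      case 1
      then have "real j * a = 2 * a" using assms(7) x2 aa by simp
      then have j: "j = 2" using assms(3) by simp
      then have am: "a = real m" using assms(11) by simp
      show ?thesis by (rule exI[of _ m]) (simp add: m \<open>i = 2\<close> j 1 x2 am listed_B_def smult_def)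
    next
      case 3
      then have "real j * a = 2 * a" using assms(7) x2 aa by simp
      then have j: "j = 2" using assms(3) by simp
      then have am: "a = real m" using assms(11) by simp
      show ?thesis by (rule exI[of _ m]) (simp add: m \<open>i = 2\<close> j 3 x2 am listed_B_def smult_def)
    next
      case 4: 2
      then have "real j * a = 3 * a" using assms(7) x2 aa by simp
      then have j: "j = 3" using assms(3) by simp
      then have am: "2 * a = real m" using assms(11) by simp
      show ?thesis by (rule exI[of _ m]) (simp add: m \<open>i = 2\<close> j 4 x2 am[symmetric] listed_B_def smult_def)
    qed
  next
    case 3
    then have "x0 > x1" "x1 > x2" using assms(8,9) by auto
    then have x: "x0 = a" "x1 = 0" "x2 = -a" using assms(3-6) by auto
    have "real j * a = 2 * a" using assms(7) x aa by simp
    then have j: "j = 2" using assms(3) by simp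
    then have am: "a = real m" using assms(11) by simp
    show ?thesis by (rule exI[of _ m]) (simp add: m 3 j x am listed_B_def smult_def)
  qed
qed



lemma core4:
  fixes x0 x1 x2 x3 a :: real
  assumes "i \<in> {1..4}" "j \<in> {1..4}" "a > 0"
  "x0 = a \<or> x0 = -a \<or> x0 = 0" "x1 = a \<or> x1 = -a \<or> x1 = 0" "x2 = a \<or> x2 = -a \<or> x2 = 0"
  "x3 = a \<or> x3 = -a \<or> x3 = 0"
  "\<bar>x0\<bar> + \<bar>x1\<bar> + \<bar>x2\<bar> + \<bar>x3\<bar> = real j * a"
  "1 \<noteq> i \<Longrightarrow> x0 > x1" "2 \<noteq> i \<Longrightarrow> x1 > x2" "3 \<noteq> i \<Longrightarrow> x2 > x3"
  "i \<noteq> 4 \<Longrightarrow> x3 > 0"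
  "if j < 4 then a = real m else 2 * a = real m"
  shows "\<exists>m::nat. m > 0 \<and> (\<exists>\<mu>\<in>listed_B 4 i j. [x0, x1, x2, x3] = smult (real m) \<mu>)"
proof -
  have i: "i = 3"
  proof (rule ccontr)
    assume "i \<noteq> 3"
    then consider "i \<noteq> 1" "i \<noteq> 2" "i \<noteq> 3" | "i \<noteq> 4" "i \<noteq> 3" by force
    then show False
    proof cases
      case 1
      then have "x0 > x1" "x1 > x2" "x2 > x3" using assms(9-11) by auto
      then show False using assms(3-7) by auto
    next
      case 2
      then have "x2 > x3" "x3 > 0" using assms(11,12) by auto
      then show False using assms(3-7) by auto
    qed
  qed
  have x3: "x3 = a" using assms(12) i assms(7) assms(3) by auto
  have "x0 > x1" "x1 > x2" using assms(9,10) i by auto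
  then have x: "x0 = a" "x1 = 0" "x2 = -a" using assms(3-6) by auto
  have "real j * a = 3 * a" using assms(8) x x3 assms(3) by simp
  then have j: "j = 3" using assms(3) by simp
  have am: "a = real m" using assms(13) j by simp
  then have m: "m > 0" using assms(3) by simp
  show ?thesis
    by (rule exI[of _ m]) (simp add: m i j x x3 am listed_B_def smult_def)
qed



lemma core:
  fixes lam :: "real list" and a :: real
  assumes "length lam = n" "2 \<le> n" "i \<in> {1..n}" "j \<in> {1..n}" "a > 0"
  "\<forall>x\<in>set lam. x = a \<or> x = -a \<or> x = 0"
  "sum_list (map abs lam) = real j * a"
  "\<forall>k. 1 \<le> k \<longrightarrow> k < n \<longrightarrow> k \<noteq> i \<longrightarrow> lam ! (k - 1) > lam ! k"
  "i \<noteq> n \<longrightarrow> lam ! (n - 1) > 0"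
  "if j < n then a = real m else 2 * a = real m"
  shows "\<exists>m::nat. m > 0 \<and> (\<exists>\<mu>\<in>listed_B n i j. lam = smult (real m) \<mu>)"
proof -
  have v: "lam ! t = a \<or> lam ! t = -a \<or> lam ! t = 0" if "t < n" for t
    using assms(1,6) that nth_mem by blast
  have "n \<le> 4"
  proof (rule ccontr)
    assume n5: "\<not> n \<le> 4"
    show False
    proof (cases "i \<le> n - 2")
      case True
      have "lam ! (n - 2) > lam ! (n - 1)" using assms(8)[rule_format, of "n - 1"] True n5
        by (simp add: numeral_eq_Suc)
      moreover have "lam ! (n - 1) > 0" using assms(9) True n5 by simp
      ultimately show False using v[of "n - 1"] v[of "n - 2"] n5 assms(5) by auto
    next
      case False
      have "lam ! 0 > lam ! 1" "lam ! 1 > lam ! 2" "lam ! 2 > lam ! 3"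
        using assms(8)[rule_format, of 1] assms(8)[rule_format, of 2] assms(8)[rule_format, of 3] False n5
        by auto
      then show False using v[of 0] v[of 1] v[of 2] v[of 3] n5 assms(5) by auto
    qed
  qed
  then consider "n = 2" | "n = 3" | "n = 4" using assms(2) by linarith
  then show ?thesis
  proof cases
    case 1
    then obtain x0 x1 where l: "lam = [x0, x1]" using assms(1)
      by (auto simp: length_Suc_conv numeral_eq_Suc)
    show ?thesis unfolding l 1
      apply (rule core2[where a = a and m = m])
      using assms(3-7,9,10) assms(8)[rule_format, of 1] unfolding l 1 by auto
  next
    case 2
    then obtain x0 x1 x2 where l: "lam = [x0, x1, x2]" using assms(1)
      by (auto simp: length_Suc_conv numeral_eq_Suc)
    show ?thesis unfolding l 2
      apply (rule core3[where a = a and m = m])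
      using assms(3-7,9,10) assms(8)[rule_format, of 1] assms(8)[rule_format, of 2] unfolding l 2 by auto
  next
    case 3
    then obtain x0 x1 x2 x3 where l: "lam = [x0, x1, x2, x3]" using assms(1)
      by (auto simp: length_Suc_conv numeral_eq_Suc)
    show ?thesis unfolding l 3
      apply (rule core4[where a = a and m = m])
      using assms(3-7,9,10) assms(8)[rule_format, of 1] assms(8)[rule_format, of 2]
        assms(8)[rule_format, of 3] unfolding l 3 by auto
  qed
qed



lemma len_ev[simp]: "length (ev n k) = n" by (simp add: ev_def)
lemma nth_ev[simp]: "t < n \<Longrightarrow> ev n k ! t = (if Suc t = k then 1 else 0)"
  by (simp add: ev_def nth_upt del: upt_Suc)
lemma len_vadd[simp]: "length (vadd x y) = min (length x) (length y)" by (simp add: vadd_def)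
lemma nth_vadd[simp]: "t < length x \<Longrightarrow> t < length y \<Longrightarrow> vadd x y ! t = x ! t + y ! t"
  by (simp add: vadd_def)
lemma len_smult[simp]: "length (smult c x) = length x" by (simp add: smult_def)
lemma nth_smult[simp]: "t < length x \<Longrightarrow> smult c x ! t = c * x ! t" by (simp add: smult_def)
lemma len_vsub[simp]: "length (vsub x y) = min (length x) (length y)" by (simp add: vsub_def)
lemma nth_vsub[simp]: "t < length x \<Longrightarrow> t < length y \<Longrightarrow> vsub x y ! t = x ! t - y ! t"
  by (simp add: vsub_def)
lemma ip_sum: "length x = n \<Longrightarrow> length y = n \<Longrightarrow> ip x y = (\<Sum>t<n. x ! t * y ! t)"
  by (simp add: ip_def sum_list_sum_nth atLeast0LessThan)

lemma ip_ev: "length x = n \<Longrightarrow> 1 \<le> k \<Longrightarrow> k \<le> n \<Longrightarrow> ip x (ev n k) = x ! (k - 1)"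
proof -
  assume a: "length x = n" "1 \<le> k" "k \<le> n"
  have "ip x (ev n k) = (\<Sum>t<n. x ! t * ev n k ! t)" using a by (simp add: ip_sum)
  also have "\<dots> = (\<Sum>t<n. if t = k - 1 then x ! t else 0)"
    using a by (intro sum.cong) auto
  also have "\<dots> = x ! (k - 1)" using a by auto
  finally show ?thesis .
qed

lemma ip_lin_r: "length x = n \<Longrightarrow> length y = n \<Longrightarrow> length z = n \<Longrightarrow>
   ip x (vadd (smult s y) (smult u z)) = s * ip x y + u * ip x z"
  by (simp add: ip_sum sum_distrib_left sum.distrib algebra_simps)

lemma ip_smult_r: "length x = n \<Longrightarrow> length y = n \<Longrightarrow> ip x (smult s y) = s * ip x y"
  by (simp add: ip_sum sum_distrib_left algebra_simps)


lemma len_reflect[simp]: "length \<alpha> = length x \<Longrightarrow> length (reflect \<alpha> x) = length x"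
  by (simp add: reflect_def)
lemma nth_reflect: "length \<alpha> = length x \<Longrightarrow> t < length x \<Longrightarrow>
   reflect \<alpha> x ! t = x ! t - ip x (coroot \<alpha>) * \<alpha> ! t"
  by (simp add: reflect_def)
lemma ip_coroot: "length \<alpha> = length x \<Longrightarrow> ip x (coroot \<alpha>) = 2 / ip \<alpha> \<alpha> * ip x \<alpha>"
  by (simp add: coroot_def ip_smult_r)

lemma ip_comm: "length x = length y \<Longrightarrow> ip x y = ip y x"
  by (simp add: ip_sum mult.commute)
lemma ip_smult_l: "length x = n \<Longrightarrow> length y = n \<Longrightarrow> ip (smult s x) y = s * ip x y"
  by (simp add: ip_sum sum_distrib_left algebra_simps)
lemma ip_vadd_l: "length x = n \<Longrightarrow> length y = n \<Longrightarrow> length z = n \<Longrightarrow> ip (vadd x y) z = ip x z + ip y z"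
  by (simp add: ip_sum sum.distrib algebra_simps)
lemma ip_ev_l: "length x = n \<Longrightarrow> 1 \<le> k \<Longrightarrow> k \<le> n \<Longrightarrow> ip (ev n k) x = x ! (k - 1)"
  by (simp add: ip_comm ip_ev)

lemma reflect_R1:
  assumes "length x = n" "1 \<le> k" "k \<le> n" "s \<in> {1, -1}"
  shows "reflect (smult s (ev n k)) x = x[k - 1 := - (x ! (k - 1))]"
proof -
  let ?a = "smult s (ev n k)"
  have s2: "s * s = 1" using assms(4) by auto
  have aa: "ip ?a ?a = 1"
    using assms by (simp add: ip_smult_l ip_smult_r ip_ev s2)
  have xa: "ip x (coroot ?a) = 2 * s * x ! (k - 1)"
    using assms by (simp add: ip_coroot aa ip_smult_r ip_ev)
  show ?thesis
  proof (rule nth_equalityI)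
    show "length (reflect ?a x) = length (x[k - 1 := - (x ! (k - 1))])" using assms by simp
    fix t assume "t < length (reflect ?a x)"
    then have t: "t < n" using assms by simp
    show "reflect ?a x ! t = x[k - 1 := - (x ! (k - 1))] ! t"
      using assms t by (auto simp: nth_reflect xa s2 nth_list_update algebra_simps)
  qed
qed

lemma reflect_R2:
  assumes "length x = n" "1 \<le> k" "k \<le> n" "1 \<le> l" "l \<le> n" "k \<noteq> l" "s \<in> {1, -1}" "u \<in> {1, -1}"
  shows "reflect (vadd (smult s (ev n k)) (smult u (ev n l))) x
     = x[k - 1 := - s * u * (x ! (l - 1)), l - 1 := - s * u * (x ! (k - 1))]"
proof -
  let ?a = "vadd (smult s (ev n k)) (smult u (ev n l))"
  have s2: "s * s = 1" using assms(7) by auto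
  have u2: "u * u = 1" using assms(8) by auto
  have la: "length ?a = n" by simp
  have kl: "k - 1 \<noteq> l - 1" using assms by arith
  have aa: "ip ?a ?a = 2"
    using assms kl by (simp add: ip_vadd_l ip_lin_r ip_smult_l ip_smult_r ip_ev s2 u2)
  have xa: "ip x (coroot ?a) = s * x ! (k - 1) + u * x ! (l - 1)"
    using assms by (simp add: ip_coroot aa ip_lin_r ip_ev)
  show ?thesis
  proof (rule nth_equalityI)
    show "length (reflect ?a x) = length (x[k - 1 := - s * u * (x ! (l - 1)), l - 1 := - s * u * (x ! (k - 1))])" using assms by simp
    fix t assume "t < length (reflect ?a x)"
    then have t: "t < n" using assms by simp
    have ek: "ev n k ! t = (if t = k - 1 then 1 else 0)" using t assms(2) by auto
    have el: "ev n l ! t = (if t = l - 1 then 1 else 0)" using t assms(4) by auto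
    have rt: "reflect ?a x ! t = x ! t - (s * x ! (k - 1) + u * x ! (l - 1)) *
        (s * (if t = k - 1 then 1 else 0) + u * (if t = l - 1 then 1 else 0))"
      using t assms(1) by (simp add: nth_reflect xa ek el)
    have k1: "k - 1 < n" "l - 1 < n" using assms by auto
    show "reflect ?a x ! t = x[k - 1 := - s * u * (x ! (l - 1)), l - 1 := - s * u * (x ! (k - 1))] ! t"
    proof (cases "t = k - 1")
      case True
      then have "x[k - 1 := - s * u * (x ! (l - 1)), l - 1 := - s * u * (x ! (k - 1))] ! t = - s * u * (x ! (l - 1))"
        using kl k1 assms(1) by simp
      moreover have "reflect ?a x ! t = x ! (k - 1) - (s * x ! (k - 1) + u * x ! (l - 1)) * s"
        using rt True kl by simp
      ultimately show ?thesis using assms(7) by auto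
    next
      case False
      show ?thesis
      proof (cases "t = l - 1")
        case True
        then have "x[k - 1 := - s * u * (x ! (l - 1)), l - 1 := - s * u * (x ! (k - 1))] ! t = - s * u * (x ! (k - 1))"
          using kl k1 assms(1) by simp
        moreover have "reflect ?a x ! t = x ! (l - 1) - (s * x ! (k - 1) + u * x ! (l - 1)) * u"
          using rt True kl by simp
        ultimately show ?thesis using assms(8) by auto
      next
        case False2: False
        then show ?thesis using rt False by simp
      qed
    qed
  qed
qed

lemma map_abs_R1: "map abs (x[k := - (x ! k)]) = map abs (x :: real list)"
proof (rule nth_equalityI)
  fix i assume "i < length (map abs (x[k := - (x ! k)]))"
  then show "map abs (x[k := - (x ! k)]) ! i = map abs x ! i" by (cases "i = k") auto
qed simp

lemma mset_abs_R2:
  fixes x :: "real list"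
  assumes "a < length x" "b < length x" "\<bar>c\<bar> = 1"
  shows "mset (map abs (x[a := c * (x ! b), b := c * (x ! a)])) = mset (map abs x)"
proof -
  have "map abs (x[a := c * (x ! b), b := c * (x ! a)]) = (map abs x)[a := (map abs x) ! b, b := (map abs x) ! a]"
  proof -
    have c: "\<bar>c * v\<bar> = \<bar>v\<bar>" for v using assms by (simp add: abs_mult)
    show ?thesis using assms by (simp add: map_update c)
  qed
  then show ?thesis using mset_swap[of b "map abs x" a] assms by simp
qed

lemma orbit_inv:
  assumes "length lam = n" "\<mu> \<in> weyl_orbit n lam"
  shows "length \<mu> = n \<and> mset (map abs \<mu>) = mset (map abs lam)"
  using assms(2)
proof induction
  case base then show ?case using assms by simp
next
  case (step \<mu> \<alpha>)
  then have l: "length \<mu> = n" by simp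
  from step(2) consider
     (A) s k where "\<alpha> = smult s (ev n k)" "s \<in> {1, -1}" "k \<in> {1..n}"
   | (B) s u k l where "\<alpha> = vadd (smult s (ev n k)) (smult u (ev n l))" "s \<in> {1, -1}" "u \<in> {1, -1}"
       "k \<in> {1..n}" "l \<in> {1..n}" "k \<noteq> l"
    unfolding roots_B_def by blast
  note cs = this
  have IH: "mset (map abs \<mu>) = mset (map abs lam)" using step(3) by blast
  from cs show ?case
  proof cases
    case A
    have R: "reflect \<alpha> \<mu> = \<mu>[k - 1 := - (\<mu> ! (k - 1))]" using A l by (simp add: reflect_R1)
    have "map abs (reflect \<alpha> \<mu>) = map abs \<mu>" unfolding R by (rule map_abs_R1)
    then have m1: "mset (map abs (reflect \<alpha> \<mu>)) = mset (map abs \<mu>)" by (simp only:)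
    have l2: "length (reflect \<alpha> \<mu>) = n" unfolding R using l by simp
    show ?thesis using l2 trans[OF m1 IH] by blast
  next
    case B
    have c: "\<bar>- s * u\<bar> = 1" using B by auto
    have R: "reflect \<alpha> \<mu> = \<mu>[k - 1 := - s * u * (\<mu> ! (l - 1)), l - 1 := - s * u * (\<mu> ! (k - 1))]"
      using B l by (simp add: reflect_R2)
    have kl: "k - 1 < length \<mu>" "l - 1 < length \<mu>" using B l by auto
    have m1: "mset (map abs (reflect \<alpha> \<mu>)) = mset (map abs \<mu>)"
      unfolding R by (rule mset_abs_R2[OF kl c])
    have l2: "length (reflect \<alpha> \<mu>) = n" unfolding R using l by simp
    show ?thesis using l2 trans[OF m1 IH] by blast
  qed
qed

lemma smult_one[simp]: "smult 1 x = x" by (simp add: smult_def)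

lemma len_sr[simp]: "length (simple_root n k) = n" by (simp add: simple_root_def)

lemma sr_root: "1 \<le> k \<Longrightarrow> k \<le> n \<Longrightarrow> simple_root n k \<in> roots_B n"
proof -
  assume k: "1 \<le> k" "k \<le> n"
  show ?thesis
  proof (cases "k < n")
    case True
    have "simple_root n k = vadd (smult 1 (ev n k)) (smult (-1) (ev n (Suc k)))"
      using True by (simp add: simple_root_def vsub_def)
    then show ?thesis unfolding roots_B_def using k True
      by (intro UnI2 CollectI exI[of _ 1] exI[of _ "-1"] exI[of _ k] exI[of _ "Suc k"]) auto
  next
    case False
    have "simple_root n k = smult 1 (ev n n)" using False by (simp add: simple_root_def)
    then show ?thesis unfolding roots_B_def using k
      by (intro UnI1 CollectI exI[of _ 1] exI[of _ n]) auto
  qed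
qed

lemma ip_sr: "length x = n \<Longrightarrow> 1 \<le> k \<Longrightarrow> k \<le> n \<Longrightarrow>
   ip x (simple_root n k) = (if k < n then x ! (k - 1) - x ! k else x ! (n - 1))"
  by (auto simp: simple_root_def vsub_def ip_lin_r[where s=1, simplified] ip_ev)

lemma nth_sr: "t < n \<Longrightarrow> simple_root n k ! t = (if k < n then (if Suc t = k then 1 else 0) - (if t = k then 1 else 0) else if Suc t = n then 1 else 0)"
  by (simp add: simple_root_def)

lemma ip_sr_self: "1 \<le> k \<Longrightarrow> k \<le> n \<Longrightarrow>
   ip (simple_root n k) (simple_root n k) = (if k < n then 2 else 1)"
  by (auto simp: ip_sr nth_sr)

lemma ip_coroot_sr: "length x = n \<Longrightarrow> 1 \<le> k \<Longrightarrow> k \<le> n \<Longrightarrow>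
   ip x (coroot (simple_root n k)) = (if k < n then x ! (k - 1) - x ! k else 2 * x ! (n - 1))"
  by (simp add: ip_coroot ip_sr_self ip_sr nth_sr)

lemma sr_inj: "1 \<le> k \<Longrightarrow> k \<le> n \<Longrightarrow> 1 \<le> i \<Longrightarrow> i \<le> n \<Longrightarrow>
   simple_root n k = simple_root n i \<Longrightarrow> k = i"
proof (rule ccontr)
  assume a: "1 \<le> k" "k \<le> n" "1 \<le> i" "i \<le> n" "simple_root n k = simple_root n i" "k \<noteq> i"
  have "simple_root n k ! (k - 1) = 1" using a(1-4,6) by (auto simp: nth_sr)
  moreover have "simple_root n i ! (k - 1) \<noteq> 1" using a(1-4,6) by (auto simp: nth_sr)
  ultimately show False using a(5) by metis
qed

lemma dom_char:
  assumes "length \<mu> = n" "1 \<le> n" "dominant n \<mu>"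
  shows "(\<forall>t. Suc t < n \<longrightarrow> \<mu> ! (Suc t) \<le> \<mu> ! t) \<and> \<mu> ! (n - 1) \<ge> 0"
proof -
  have d: "\<And>k. 1 \<le> k \<Longrightarrow> k \<le> n \<Longrightarrow> ip \<mu> (simple_root n k) \<ge> 0"
    using assms(3) unfolding dominant_def simple_roots_def by auto
  have "\<mu> ! (Suc t) \<le> \<mu> ! t" if "Suc t < n" for t
    using d[of "Suc t"] that assms by (simp add: ip_sr)
  moreover have "\<mu> ! (n - 1) \<ge> 0" using d[of n] assms by (simp add: ip_sr)
  ultimately show ?thesis by blast
qed

lemma dom_nonneg:
  assumes "length \<mu> = n" "1 \<le> n" "dominant n \<mu>"
  shows "\<forall>t<n. \<mu> ! t \<ge> 0"
proof -
  note c = dom_char[OF assms]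
  have "\<forall>t. t < n \<longrightarrow> \<mu> ! (n - 1 - t) \<ge> 0" 
  proof
    fix t show "t < n \<longrightarrow> \<mu> ! (n - 1 - t) \<ge> 0"
    proof (induction t)
      case 0 then show ?case using c by simp
    next
      case (Suc t)
      show ?case
      proof
        assume "Suc t < n"
        then have "\<mu> ! (Suc (n - 1 - Suc t)) \<le> \<mu> ! (n - 1 - Suc t)" using c by auto
        moreover have "Suc (n - 1 - Suc t) = n - 1 - t" using \<open>Suc t < n\<close> by arith
        ultimately show "\<mu> ! (n - 1 - Suc t) \<ge> 0" using Suc \<open>Suc t < n\<close> by auto
      qed
    qed
  qed
  note h = this
  show ?thesis
  proof (intro allI impI)
    fix t assume t: "t < n"
    have "n - 1 - t < n" using t by arith
    then have "\<mu> ! (n - 1 - (n - 1 - t)) \<ge> 0" using h by blast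
    moreover have "n - 1 - (n - 1 - t) = t" using t by arith
    ultimately show "\<mu> ! t \<ge> 0" by simp
  qed
qed

lemma dom_unique:
  assumes "length \<mu> = n" "1 \<le> n" "dominant n \<mu>" "length \<nu> = n" "dominant n \<nu>"
    "mset (map abs \<mu>) = mset (map abs \<nu>)"
  shows "\<mu> = \<nu>"
proof -
  have m: "map abs \<mu> = \<mu>" using dom_nonneg[OF assms(1-3)] assms(1)
    by (intro nth_equalityI) auto
  have v: "map abs \<nu> = \<nu>" using dom_nonneg[OF assms(4,2,5)] assms(4)
    by (intro nth_equalityI) auto
  have sm: "sorted (rev \<mu>)" using dom_char[OF assms(1-3)] assms(1) by (simp add: sorted_rev_iff_nth_Suc)
  have sv: "sorted (rev \<nu>)" using dom_char[OF assms(4,2,5)] assms(4) by (simp add: sorted_rev_iff_nth_Suc)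
  have "mset (rev \<mu>) = mset \<nu>" using assms(6) m v by simp
  then have "sort \<nu> = rev \<mu>" using sm by (rule properties_for_sort)
  moreover have "sort \<nu> = rev \<nu>" using sv by (intro properties_for_sort) simp_all
  ultimately show ?thesis by simp
qed

lemma orbit_finite:
  assumes "length lam = n"
  shows "finite (weyl_orbit n lam)"
proof -
  let ?A = "set lam \<union> uminus ` set lam"
  have "weyl_orbit n lam \<subseteq> {xs. set xs \<subseteq> ?A \<and> length xs = n}"
  proof
    fix \<mu> assume m: "\<mu> \<in> weyl_orbit n lam"
    note inv = orbit_inv[OF assms m]
    have "set \<mu> \<subseteq> ?A"
    proof
      fix v assume "v \<in> set \<mu>"
      then have "\<bar>v\<bar> \<in> set (map abs \<mu>)" by simp
      also have "set (map abs \<mu>) = set (map abs lam)" using inv by (metis set_mset_mset)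
      finally obtain w where "w \<in> set lam" "\<bar>v\<bar> = \<bar>w\<bar>" by auto
      moreover then have "v = w \<or> v = - w" by (auto simp: abs_eq_iff)
      ultimately show "v \<in> ?A" by auto
    qed
    then show "\<mu> \<in> {xs. set xs \<subseteq> ?A \<and> length xs = n}" using inv by simp
  qed
  then show ?thesis by (rule finite_subset) (intro finite_lists_length_eq, simp)
qed

lemma ip_reflect:
  assumes "length \<alpha> = n" "length x = n" "length y = n"
  shows "ip (reflect \<alpha> x) y = ip x y - ip x (coroot \<alpha>) * ip \<alpha> y"
  using assms by (simp add: ip_sum nth_reflect sum_subtractf sum_distrib_left algebra_simps)

lemma dom_exists:
  assumes "length lam = n" "1 \<le> n"
  shows "\<exists>\<mu>\<in>weyl_orbit n lam. dominant n \<mu>"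
proof -
  define \<rho> :: "real list" where "\<rho> = map (\<lambda>t. real (n - t)) [0..<n]"
  have lr: "length \<rho> = n" by (simp add: \<rho>_def)
  define f where "f x = ip x \<rho>" for x
  let ?O = "weyl_orbit n lam"
  have fin: "finite (f ` ?O)" using orbit_finite[OF assms(1)] by simp
  have ne: "f ` ?O \<noteq> {}" using weyl_orbit.base by blast
  obtain \<mu> where mO: "\<mu> \<in> ?O" and mf: "f \<mu> = Max (f ` ?O)" using Max_in[OF fin ne] by auto
  have lm: "length \<mu> = n" using orbit_inv[OF assms(1) mO] by simp
  have "dominant n \<mu>"
    unfolding dominant_def simple_roots_def
  proof
    fix \<alpha> assume "\<alpha> \<in> simple_root n ` {1..n}"
    then obtain k where k: "1 \<le> k" "k \<le> n" "\<alpha> = simple_root n k" by auto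
    show "ip \<mu> \<alpha> \<ge> 0"
    proof (rule ccontr)
      assume neg: "\<not> ip \<mu> \<alpha> \<ge> 0"
      have la: "length \<alpha> = n" using k by simp
      have aa: "ip \<alpha> \<alpha> > 0" using k by (simp add: ip_sr_self)
      have c: "ip \<mu> (coroot \<alpha>) < 0"
      proof -
        have "2 * ip \<mu> \<alpha> < 0" using neg by simp
        then have "2 * ip \<mu> \<alpha> / ip \<alpha> \<alpha> < 0" using aa by (simp add: divide_neg_pos)
        then show ?thesis using la lm by (simp add: ip_coroot)
      qed
      have ar: "ip \<alpha> \<rho> = 1"
      proof -
        have "ip \<alpha> \<rho> = ip \<rho> \<alpha>" using la lr by (simp add: ip_comm)
        also have "\<dots> = (if k < n then \<rho> ! (k - 1) - \<rho> ! k else \<rho> ! (n - 1))"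
          using ip_sr[OF lr k(1,2)] k(3) by simp
        also have "\<dots> = 1"
        proof -
          have r: "\<rho> ! t = real (n - t)" if "t < n" for t using that by (simp add: \<rho>_def)
          show ?thesis
          proof (cases "k < n")
            case True
            have e: "n - (k - 1) = Suc (n - k)" using True k(1) by arith
            show ?thesis using True k(1) by (simp add: r e)
          next
            case False
            then show ?thesis using k(1,2) by (simp add: r)
          qed
        qed
        finally show ?thesis .
      qed
      have "reflect \<alpha> \<mu> \<in> ?O" using mO sr_root[OF k(1,2)] k(3) by (auto intro: weyl_orbit.step)
      then have "f (reflect \<alpha> \<mu>) \<le> f \<mu>" using mf Max_ge[OF fin] by auto
      moreover have "f (reflect \<alpha> \<mu>) = f \<mu> - ip \<mu> (coroot \<alpha>)"
        unfolding f_def using ip_reflect[OF la lm lr] ar by simp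
      ultimately show False using c by simp
    qed
  qed
  then show ?thesis using mO by blast
qed

lemma dom_rep:
  assumes "length lam = n" "1 \<le> n"
  shows "dominant_rep n lam \<in> weyl_orbit n lam \<and> dominant n (dominant_rep n lam)"
proof -
  have "\<exists>!\<mu>. \<mu> \<in> weyl_orbit n lam \<and> dominant n \<mu>"
  proof -
    obtain \<mu> where m: "\<mu> \<in> weyl_orbit n lam" "dominant n \<mu>" using dom_exists[OF assms] by blast
    have "\<nu> = \<mu>" if "\<nu> \<in> weyl_orbit n lam" "dominant n \<nu>" for \<nu>
    proof -
      have a1: "length \<mu> = n" "mset (map abs \<mu>) = mset (map abs lam)" using orbit_inv[OF assms(1) m(1)] by auto
      have a2: "length \<nu> = n" "mset (map abs \<nu>) = mset (map abs lam)" using orbit_inv[OF assms(1) that(1)] by auto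
      have "mset (map abs \<nu>) = mset (map abs \<mu>)" using a1(2) a2(2) by (simp only:)
      then show ?thesis using dom_unique[OF a2(1) assms(2) that(2) a1(1) m(2)] by blast
    qed
    then show ?thesis using m by blast
  qed
  then show ?thesis unfolding dominant_rep_def by (rule theI')
qed



lemma integ_e:
  assumes "integral_weight n lam" "t < n"
  shows "2 * lam ! t \<in> \<int>"
proof -
  have r: "smult 1 (ev n (Suc t)) \<in> roots_B n" unfolding roots_B_def using assms(2)
    by (intro UnI1 CollectI exI[of _ 1] exI[of _ "Suc t"]) auto
  have l: "length lam = n" using assms(1) by (simp add: integral_weight_def)
  have "ip lam (coroot (ev n (Suc t))) = 2 * lam ! t"
    using l assms(2) by (simp add: ip_coroot ip_ev)
  moreover have "ip lam (coroot (ev n (Suc t))) \<in> \<int>"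
    using assms(1) r unfolding integral_weight_def smult_one by blast
  ultimately show ?thesis by simp
qed

lemma integ_ee:
  assumes "integral_weight n lam" "t < n" "t' < n" "t \<noteq> t'"
  shows "lam ! t + lam ! t' \<in> \<int>"
proof -
  let ?a = "vadd (smult 1 (ev n (Suc t))) (smult 1 (ev n (Suc t')))"
  have r: "?a \<in> roots_B n" unfolding roots_B_def using assms(2-4)
    by (intro UnI2 CollectI exI[of _ 1] exI[of _ 1] exI[of _ "Suc t"] exI[of _ "Suc t'"]) auto
  have l: "length lam = n" using assms(1) by (simp add: integral_weight_def)
  have aa: "ip ?a ?a = 2"
    using assms(2-4) by (simp add: ip_vadd_l ip_lin_r[where s=1 and u=1, simplified] ip_ev)
  have "ip lam (coroot ?a) = lam ! t + lam ! t'"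
    using l assms(2-4) by (simp add: ip_coroot aa ip_lin_r[where s=1 and u=1, simplified] ip_ev)
  moreover have "ip lam (coroot ?a) \<in> \<int>"
    using assms(1) r unfolding integral_weight_def by blast
  ultimately show ?thesis by simp
qed

theorem theorem5p8:
  fixes n i j :: nat and lam :: "real list"
  assumes "n \<ge> 2" and "i \<in> {1..n}" and "j \<in> {1..n}"
    and "basic_system n i j"
    and "basic_weight n i j lam"
  shows "\<exists>m::nat. m > 0 \<and> (\<exists>\<mu>\<in>listed_B n i j. lam = smult (real m) \<mu>)"
proof -
  have iw: "integral_weight n lam"
   and pos: "\<forall>\<alpha>\<in>simple_roots n - {simple_root n i}. ip lam (coroot \<alpha>) \<in> \<int> \<and> ip lam (coroot \<alpha>) > 0"
   and Z: "{\<alpha>\<in>simple_roots n. ip (dominant_rep n lam) \<alpha> = 0} = simple_roots n - {simple_root n j}"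
    using assms(5) unfolding basic_weight_def by auto
  have ln: "length lam = n" using iw by (simp add: integral_weight_def)
  have n1: "1 \<le> n" using assms(1) by simp
  define \<mu> where "\<mu> = dominant_rep n lam"
  have mO: "\<mu> \<in> weyl_orbit n lam" and md: "dominant n \<mu>"
    using dom_rep[OF ln n1] unfolding \<mu>_def by auto
  have lm: "length \<mu> = n" and ms: "mset (map abs \<mu>) = mset (map abs lam)"
    using orbit_inv[OF ln mO] by auto
  have j1: "1 \<le> j" "j \<le> n" using assms(3) by auto
  have Zk: "ip \<mu> (simple_root n k) = 0 \<longleftrightarrow> k \<noteq> j" if "1 \<le> k" "k \<le> n" for k
  proof -
    have mem: "simple_root n k \<in> simple_roots n" using that by (simp add: simple_roots_def)
    have "simple_root n k \<noteq> simple_root n j \<longleftrightarrow> k \<noteq> j" using sr_inj[OF that j1] by auto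
    then show ?thesis using Z mem unfolding \<mu>_def[symmetric] by blast
  qed
  have eq: "\<mu> ! (k - 1) = \<mu> ! k" if "1 \<le> k" "k < n" "k \<noteq> j" for k
    using Zk[of k] that lm by (simp add: ip_sr)
  have last: "j < n \<Longrightarrow> \<mu> ! (n - 1) = 0" using Zk[of n] lm n1 by (simp add: ip_sr)
  define a where "a = \<mu> ! 0"
  have A: "t < j \<longrightarrow> \<mu> ! t = a" for t
  proof (induction t)
    case 0 then show ?case by (simp add: a_def)
  next
    case (Suc t)
    show ?case using eq[of "Suc t"] Suc j1 by auto
  qed
  have B: "\<forall>t. j \<le> t \<longrightarrow> t < n \<longrightarrow> \<mu> ! t = 0"
  proof -
    have "d < n \<longrightarrow> j \<le> n - 1 - d \<longrightarrow> \<mu> ! (n - 1 - d) = 0" for d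
    proof (induction d)
      case 0 then show ?case using last j1 n1 by auto
    next
      case (Suc d)
      show ?case
      proof (intro impI)
        assume h: "Suc d < n" "j \<le> n - 1 - Suc d"
        have "Suc (n - 1 - Suc d) = n - 1 - d" using h by arith
        then have "\<mu> ! (n - 1 - Suc d) = \<mu> ! (n - 1 - d)"
          using eq[of "Suc (n - 1 - Suc d)"] h by simp
        then show "\<mu> ! (n - 1 - Suc d) = 0" using Suc h by auto
      qed
    qed
    note h = this
    show ?thesis
    proof (intro allI impI)
      fix t assume t: "j \<le> t" "t < n"
      have "n - 1 - t < n" "j \<le> n - 1 - (n - 1 - t)" using t by arith+
      then have "\<mu> ! (n - 1 - (n - 1 - t)) = 0" using h by blast
      moreover have "n - 1 - (n - 1 - t) = t" using t by arith
      ultimately show "\<mu> ! t = 0" by simp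
    qed
  qed
  have nn: "\<forall>t<n. \<mu> ! t \<ge> 0" using dom_nonneg[OF lm n1 md] .
  have apos: "a > 0"
  proof (cases "j < n")
    case True
    have "\<mu> ! (j - 1) - \<mu> ! j \<noteq> 0" using Zk[of j] j1 True lm by (simp add: ip_sr)
    moreover have "\<mu> ! (j - 1) = a" using A[of "j - 1"] j1 by simp
    moreover have "\<mu> ! j = 0" using B True by simp
    ultimately show ?thesis using nn n1 a_def by force
  next
    case False
    then have "\<mu> ! (n - 1) \<noteq> 0" using Zk[of n] j1 lm n1 by (simp add: ip_sr)
    moreover have "\<mu> ! (n - 1) = a" using A[of "n - 1"] j1 False n1 by simp
    ultimately show ?thesis using nn n1 a_def by force
  qed
  have mform: "\<bar>\<mu> ! t\<bar> = (if t < j then a else 0)" if "t < n" for t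
    using A B that apos by auto
  have sum_mu: "sum_list (map abs \<mu>) = real j * a"
  proof -
    have "sum_list (map abs \<mu>) = (\<Sum>t<n. \<bar>\<mu> ! t\<bar>)"
      using lm by (simp add: sum_list_sum_nth atLeast0LessThan)
    also have "\<dots> = (\<Sum>t<n. if t < j then a else 0)" using mform by (intro sum.cong) auto
    also have "\<dots> = (\<Sum>t\<in>{..<n} \<inter> {t. t < j}. a)" by (simp add: sum.If_cases)
    also have "{..<n} \<inter> {t. t < j} = {..<j}" using j1 by auto
    finally show ?thesis by simp
  qed
  have sum_lam: "sum_list (map abs lam) = real j * a"
    using sum_mu ms by (metis sum_mset_sum_list)
  have setl: "\<forall>x\<in>set lam. x = a \<or> x = -a \<or> x = 0"
  proof
    fix x assume "x \<in> set lam"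
    then have "\<bar>x\<bar> \<in> set (map abs lam)" by simp
    also have "set (map abs lam) = set (map abs \<mu>)" using ms by (metis set_mset_mset)
    finally obtain t where "t < n" "\<bar>x\<bar> = \<bar>\<mu> ! t\<bar>" using lm by (auto simp: in_set_conv_nth)
    then have "\<bar>x\<bar> = a \<or> \<bar>x\<bar> = 0" using mform by auto
    then show "x = a \<or> x = -a \<or> x = 0" by auto
  qed
  have vl: "lam ! t = a \<or> lam ! t = -a \<or> lam ! t = 0" if "t < n" for t
    using setl ln that nth_mem by blast
  have sl: "sum_list (map abs lam) = (\<Sum>t<n. \<bar>lam ! t\<bar>)"
    using ln by (simp add: sum_list_sum_nth atLeast0LessThan)
  have posk: "\<forall>k. 1 \<le> k \<longrightarrow> k < n \<longrightarrow> k \<noteq> i \<longrightarrow> lam ! (k - 1) > lam ! k"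
  proof (intro allI impI)
    fix k assume k: "1 \<le> k" "k < n" "k \<noteq> i"
    have "simple_root n k \<in> simple_roots n - {simple_root n i}"
      using k assms(2) sr_inj[of k n i] by (auto simp: simple_roots_def)
    then have "ip lam (coroot (simple_root n k)) > 0" using pos by blast
    then show "lam ! (k - 1) > lam ! k" using k ln by (simp add: ip_coroot_sr)
  qed
  have posn: "i \<noteq> n \<longrightarrow> lam ! (n - 1) > 0"
  proof
    assume "i \<noteq> n"
    then have "simple_root n n \<in> simple_roots n - {simple_root n i}"
      using n1 assms(2) sr_inj[of n n i] by (auto simp: simple_roots_def)
    then have "ip lam (coroot (simple_root n n)) > 0" using pos by blast
    then show "lam ! (n - 1) > 0" using n1 ln by (simp add: ip_coroot_sr)
  qed
  obtain m :: nat where mm: "if j < n then a = real m else 2 * a = real m"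
  proof (cases "j < n")
    case True
    obtain t1 where t1: "t1 < n" "lam ! t1 \<noteq> 0"
    proof (rule ccontr)
      assume "\<not> thesis"
      then have "\<forall>t<n. lam ! t = 0" using that by blast
      then have "sum_list (map abs lam) = 0" using sl by simp
      then show False using sum_lam apos j1 by simp
    qed
    obtain t0 where t0: "t0 < n" "lam ! t0 = 0"
    proof (rule ccontr)
      assume "\<not> thesis"
      have "\<forall>t<n. \<bar>lam ! t\<bar> = a"
      proof (intro allI impI)
        fix t assume t: "t < n"
        then have "lam ! t \<noteq> 0" using that \<open>\<not> thesis\<close> by blast
        then show "\<bar>lam ! t\<bar> = a" using vl[OF t] apos by auto
      qed
      then have "sum_list (map abs lam) = real n * a" using sl by simp
      then show False using sum_lam apos True by simp
    qed
    have "lam ! t0 + lam ! t1 \<in> \<int>" using integ_ee[OF iw t0(1) t1(1)] t0 t1 by auto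
    then have "\<bar>lam ! t1\<bar> \<in> \<int>" using t0 by simp
    moreover have "\<bar>lam ! t1\<bar> = a" using vl[OF t1(1)] t1 apos by auto
    ultimately have "a \<in> \<int>" by simp
    then obtain z where "a = of_int z" by (elim Ints_cases)
    then have "a = real (nat z)" using apos by simp
    then show ?thesis using that True by simp
  next
    case False
    then have jn: "j = n" using j1 by simp
    have z0: "(\<Sum>t<n. a - \<bar>lam ! t\<bar>) = 0" using sl sum_lam jn by (simp add: sum_subtractf)
    have nn2: "\<forall>t\<in>{..<n}. a - \<bar>lam ! t\<bar> \<ge> 0"
    proof
      fix t assume "t \<in> {..<n}"
      then have "lam ! t = a \<or> lam ! t = -a \<or> lam ! t = 0" using vl by simp
      then show "a - \<bar>lam ! t\<bar> \<ge> 0" using apos by auto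
    qed
    have "(\<Sum>t<n. a - \<bar>lam ! t\<bar>) = 0 \<longleftrightarrow> (\<forall>t\<in>{..<n}. a - \<bar>lam ! t\<bar> = 0)"
      by (rule sum_nonneg_eq_0_iff) (use nn2 in auto)
    then have "\<forall>t\<in>{..<n}. a - \<bar>lam ! t\<bar> = 0" using z0 by (rule iffD1)
    then have "\<bar>lam ! 0\<bar> = a" using n1 by auto
    moreover have "2 * lam ! 0 \<in> \<int>" using integ_e[OF iw] n1 by simp
    ultimately have "2 * a \<in> \<int>"
    proof -
      assume h1: "\<bar>lam ! 0\<bar> = a" and h2: "2 * lam ! 0 \<in> \<int>"
      show "2 * a \<in> \<int>"
      proof (cases "lam ! 0 \<ge> 0")
        case True
        have "lam ! 0 = a" using h1 abs_of_nonneg[OF True] by simp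
        then show ?thesis using h2 by simp
      next
        case False
        then have "lam ! 0 = - a" using h1 by simp
        then have e2: "- (2 * lam ! 0) = 2 * a" by simp
        have "- (2 * lam ! 0) \<in> \<int>" using h2 by (rule Ints_minus)
        then show ?thesis unfolding e2 .
      qed
    qed
    then obtain z where "2 * a = of_int z" by (elim Ints_cases)
    then have "2 * a = real (nat z)" using apos by simp
    then show ?thesis using that False by simp
  qed
  show ?thesis using core[OF ln assms(1,2,3) apos setl sum_lam posk posn mm] .
qed

end
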